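(* If $G$ and $H$ are graphs without isolated vertices, then $$\rho(G\times H)\geq\max\{\rho_o(G)\rho(H),\ \rho_o(H)\rho(G)\}.$$
   Context: All graphs are finite and simple. A packing of $G$ is a set $P\subseteq V(G)$ with $N[u]\cap N[v]=\emptyset$ for all distinct $u,v\in P$ ($N[\cdot]$ the closed neighborhood); $\rho(G)$ is the maximum size of a packing. An open packing is a set whose vertices have pairwise disjoint open neighborhoods; $\rho_o(G)$ is its maximum size. The direct product $G\times H$ has vertex set $V(G)\times V(H)$, with $(g,h)$ adjacent to $(g',h')$ iff $gg'\in E(G)$ and $hh'\in E(H)$. *)

theory Defs
  imports Main
begin

definition graph :: "'a set \<Rightarrow> ('a \<Rightarrow> 'a \<Rightarrow> bool) \<Rightarrow> bool" where
  "graph V E \<longleftrightarrow> finite V \<and> (\<forall>u v. E u v \<longrightarrow> u \<in> V \<and> v \<in> V)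
     \<and> (\<forall>u v. E u v \<longrightarrow> E v u) \<and> (\<forall>v. \<not> E v v)"

definition no_isolated :: "'a set \<Rightarrow> ('a \<Rightarrow> 'a \<Rightarrow> bool) \<Rightarrow> bool" where
  "no_isolated V E \<longleftrightarrow> (\<forall>v\<in>V. \<exists>u. E v u)"

definition open_nbhd :: "'a set \<Rightarrow> ('a \<Rightarrow> 'a \<Rightarrow> bool) \<Rightarrow> 'a \<Rightarrow> 'a set" where
  "open_nbhd V E v = {u \<in> V. E v u}"

definition closed_nbhd :: "'a set \<Rightarrow> ('a \<Rightarrow> 'a \<Rightarrow> bool) \<Rightarrow> 'a \<Rightarrow> 'a set" where
  "closed_nbhd V E v = insert v (open_nbhd V E v)"

definition packing :: "'a set \<Rightarrow> ('a \<Rightarrow> 'a \<Rightarrow> bool) \<Rightarrow> 'a set \<Rightarrow> bool" where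
  "packing V E P \<longleftrightarrow> P \<subseteq> V \<and>
     (\<forall>u\<in>P. \<forall>v\<in>P. u \<noteq> v \<longrightarrow> closed_nbhd V E u \<inter> closed_nbhd V E v = {})"

definition open_packing :: "'a set \<Rightarrow> ('a \<Rightarrow> 'a \<Rightarrow> bool) \<Rightarrow> 'a set \<Rightarrow> bool" where
  "open_packing V E P \<longleftrightarrow> P \<subseteq> V \<and>
     (\<forall>u\<in>P. \<forall>v\<in>P. u \<noteq> v \<longrightarrow> open_nbhd V E u \<inter> open_nbhd V E v = {})"

definition packing_number :: "'a set \<Rightarrow> ('a \<Rightarrow> 'a \<Rightarrow> bool) \<Rightarrow> nat" where
  "packing_number V E = Max (card ` {P. packing V E P})"

definition open_packing_number :: "'a set \<Rightarrow> ('a \<Rightarrow> 'a \<Rightarrow> bool) \<Rightarrow> nat" where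
  "open_packing_number V E = Max (card ` {P. open_packing V E P})"

definition dprod_edges :: "('a \<Rightarrow> 'a \<Rightarrow> bool) \<Rightarrow> ('b \<Rightarrow> 'b \<Rightarrow> bool)
    \<Rightarrow> ('a \<times> 'b) \<Rightarrow> ('a \<times> 'b) \<Rightarrow> bool" where
  "dprod_edges E F x y \<longleftrightarrow> E (fst x) (fst y) \<and> F (snd x) (snd y)"

end

theory Submission
  imports Defs
begin

lemma cn_prod: "closed_nbhd (V \<times> W) (dprod_edges E F) (g,h) =
   insert (g,h) {p \<in> V \<times> W. E g (fst p) \<and> F h (snd p)}"
  by (auto simp: closed_nbhd_def open_nbhd_def dprod_edges_def)

lemma pack1:
  assumes "graph V E" "graph W F" "open_packing V E Q" "packing W F P"
  shows "packing (V \<times> W) (dprod_edges E F) (Q \<times> P)"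
  unfolding packing_def
proof (intro conjI ballI impI)
  show "Q \<times> P \<subseteq> V \<times> W" using assms(3,4) by (auto simp: packing_def open_packing_def)
next
  fix u v assume u: "u \<in> Q \<times> P" and v: "v \<in> Q \<times> P" and ne: "u \<noteq> v"
  obtain g h where uu: "u = (g,h)" by (cases u)
  obtain g' h' where vv: "v = (g',h')" by (cases v)
  show "closed_nbhd (V \<times> W) (dprod_edges E F) u \<inter> closed_nbhd (V \<times> W) (dprod_edges E F) v = {}"
  proof (rule ccontr)
    assume "\<not> ?thesis"
    then obtain x y where xy: "(x,y) \<in> closed_nbhd (V \<times> W) (dprod_edges E F) u"
       "(x,y) \<in> closed_nbhd (V \<times> W) (dprod_edges E F) v" by auto
    show False
    proof (cases "h = h'")
      case False
      have "y \<in> closed_nbhd W F h" "y \<in> closed_nbhd W F h'"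
        using xy uu vv by (auto simp: closed_nbhd_def open_nbhd_def dprod_edges_def)
      then show False using assms(4) u v uu vv False by (auto simp: packing_def)
    next
      case True
      then have "g \<noteq> g'" using ne uu vv by auto
      have Fi: "\<not> F h h" using assms(2) by (auto simp: graph_def)
      have "E g x \<and> x \<in> V" "E g' x"
        using xy uu vv True Fi \<open>g \<noteq> g'\<close> by (auto simp: cn_prod)
      then have "x \<in> open_nbhd V E g" "x \<in> open_nbhd V E g'"
        by (auto simp: open_nbhd_def)
      then show False using assms(3) u v uu vv \<open>g \<noteq> g'\<close> by (auto simp: open_packing_def)
    qed
  qed
qed

lemma pack2:
  assumes "graph V E" "graph W F" "packing V E P" "open_packing W F Q"
  shows "packing (V \<times> W) (dprod_edges E F) (P \<times> Q)"
  unfolding packing_def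
proof (intro conjI ballI impI)
  show "P \<times> Q \<subseteq> V \<times> W" using assms(3,4) by (auto simp: packing_def open_packing_def)
next
  fix u v assume u: "u \<in> P \<times> Q" and v: "v \<in> P \<times> Q" and ne: "u \<noteq> v"
  obtain g h where uu: "u = (g,h)" by (cases u)
  obtain g' h' where vv: "v = (g',h')" by (cases v)
  show "closed_nbhd (V \<times> W) (dprod_edges E F) u \<inter> closed_nbhd (V \<times> W) (dprod_edges E F) v = {}"
  proof (rule ccontr)
    assume "\<not> ?thesis"
    then obtain x y where xy: "(x,y) \<in> closed_nbhd (V \<times> W) (dprod_edges E F) u"
       "(x,y) \<in> closed_nbhd (V \<times> W) (dprod_edges E F) v" by auto
    show False
    proof (cases "g = g'")
      case False
      have "x \<in> closed_nbhd V E g" "x \<in> closed_nbhd V E g'"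
        using xy uu vv by (auto simp: closed_nbhd_def open_nbhd_def dprod_edges_def)
      then show False using assms(3) u v uu vv False by (auto simp: packing_def)
    next
      case True
      then have "h \<noteq> h'" using ne uu vv by auto
      have Ei: "\<not> E g g" using assms(1) by (auto simp: graph_def)
      have "F h y \<and> y \<in> W" "F h' y"
        using xy uu vv True Ei \<open>h \<noteq> h'\<close> by (auto simp: cn_prod)
      then have "y \<in> open_nbhd W F h" "y \<in> open_nbhd W F h'"
        by (auto simp: open_nbhd_def)
      then show False using assms(4) u v uu vv \<open>h \<noteq> h'\<close> by (auto simp: open_packing_def)
    qed
  qed
qed

lemma fin_pack: "finite V \<Longrightarrow> finite (card ` {P. packing V E P})"
  by (rule finite_imageI, rule finite_subset[of _ "Pow V"]) (auto simp: packing_def)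

lemma fin_opack: "finite V \<Longrightarrow> finite (card ` {P. open_packing V E P})"
  by (rule finite_imageI, rule finite_subset[of _ "Pow V"]) (auto simp: open_packing_def)

lemma ex_pack: "finite V \<Longrightarrow> \<exists>P. packing V E P \<and> card P = packing_number V E"
proof -
  assume f: "finite V"
  have "packing V E {}" by (simp add: packing_def)
  then have "card ` {P. packing V E P} \<noteq> {}" by auto
  from Max_in[OF fin_pack[OF f] this] show ?thesis
    by (auto simp: packing_number_def)
qed

lemma ex_opack: "finite V \<Longrightarrow> \<exists>P. open_packing V E P \<and> card P = open_packing_number V E"
proof -
  assume f: "finite V"
  have "open_packing V E {}" by (simp add: open_packing_def)
  then have "card ` {P. open_packing V E P} \<noteq> {}" by auto
  from Max_in[OF fin_opack[OF f] this] show ?thesis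
    by (auto simp: open_packing_number_def)
qed

lemma le_pn: "finite V \<Longrightarrow> packing V E P \<Longrightarrow> card P \<le> packing_number V E"
  unfolding packing_number_def by (rule Max_ge[OF fin_pack]) auto

theorem mainTheorem13:
  fixes V :: "'a set" and E :: "'a \<Rightarrow> 'a \<Rightarrow> bool"
    and W :: "'b set" and F :: "'b \<Rightarrow> 'b \<Rightarrow> bool"
  assumes "graph V E" and "graph W F"
    and "no_isolated V E" and "no_isolated W F"
  shows "packing_number (V \<times> W) (dprod_edges E F) \<ge>
           max (open_packing_number V E * packing_number W F)
               (open_packing_number W F * packing_number V E)"
proof -
  have fV: "finite V" and fW: "finite W" using assms(1,2) by (auto simp: graph_def)
  have fVW: "finite (V \<times> W)" using fV fW by simp
  obtain O1 where O1: "open_packing V E O1" "card O1 = open_packing_number V E" using ex_opack[OF fV] by blast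
  obtain P1 where P1: "packing W F P1" "card P1 = packing_number W F" using ex_pack[OF fW] by blast
  obtain O2 where O2: "open_packing W F O2" "card O2 = open_packing_number W F" using ex_opack[OF fW] by blast
  obtain P2 where P2: "packing V E P2" "card P2 = packing_number V E" using ex_pack[OF fV] by blast
  have "card (O1 \<times> P1) \<le> packing_number (V \<times> W) (dprod_edges E F)"
    by (rule le_pn[OF fVW pack1[OF assms(1,2) O1(1) P1(1)]])
  moreover have "card (P2 \<times> O2) \<le> packing_number (V \<times> W) (dprod_edges E F)"
    by (rule le_pn[OF fVW pack2[OF assms(1,2) P2(1) O2(1)]])
  ultimately show ?thesis using O1 P1 O2 P2 by (simp add: card_cartesian_product mult.commute)
qed

end
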